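(* Let $n\geq 10$ be an integer and let $C_n$ be a set of $n$ points in the plane in general and convex position. Then $\mu(D(C_n))=\binom{n}{2}-5$.
   Context: A set of points in the plane is in general position if no three of its points are collinear, and in convex position if every point is a vertex of its convex hull. The disjointness graph of segments $D(P)$ is the graph whose vertices are all closed straight-line segments with both endpoints in $P$, two being adjacent if and only if they are disjoint. For a graph $G$ and $U\subseteq V(G)$, two distinct vertices $x,y\in U$ are $U$-mutually visible if $G$ contains a shortest $x$-$y$ path none of whose internal vertices lies in $U$; $U$ is a mutual-visibility set if every two distinct vertices of $U$ are $U$-mutually visible. The mutual-visibility number $\mu(G)$ is the maximum size of a mutual-visibility set of $G$. *)

theory Defs
  imports "HOL-Analysis.Analysis"
begin

definition general_position :: "(real^2) set \<Rightarrow> bool" where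
  "general_position P \<longleftrightarrow>
     (\<forall>a\<in>P. \<forall>b\<in>P. \<forall>c\<in>P. a \<noteq> b \<and> a \<noteq> c \<and> b \<noteq> c \<longrightarrow> \<not> collinear {a, b, c})"

definition convex_position :: "(real^2) set \<Rightarrow> bool" where
  "convex_position P \<longleftrightarrow> (\<forall>p\<in>P. p extreme_point_of (convex hull P))"

definition segments :: "(real^2) set \<Rightarrow> (real^2) set set" where
  "segments P = {closed_segment a b | a b. a \<in> P \<and> b \<in> P \<and> a \<noteq> b}"

definition disj_adj :: "(real^2) set \<Rightarrow> (real^2) set \<Rightarrow> bool" where
  "disj_adj s t \<longleftrightarrow> s \<inter> t = {}"

definition walk :: "'a set \<Rightarrow> ('a \<Rightarrow> 'a \<Rightarrow> bool) \<Rightarrow> 'a list \<Rightarrow> bool" where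
  "walk V E xs \<longleftrightarrow> xs \<noteq> [] \<and> set xs \<subseteq> V \<and>
     (\<forall>i. Suc i < length xs \<longrightarrow> E (xs ! i) (xs ! Suc i))"

definition shortest_path :: "'a set \<Rightarrow> ('a \<Rightarrow> 'a \<Rightarrow> bool) \<Rightarrow> 'a \<Rightarrow> 'a \<Rightarrow> 'a list \<Rightarrow> bool" where
  "shortest_path V E x y xs \<longleftrightarrow> walk V E xs \<and> hd xs = x \<and> last xs = y \<and>
     (\<forall>ys. walk V E ys \<and> hd ys = x \<and> last ys = y \<longrightarrow> length xs \<le> length ys)"

text \<open>Internal vertices of a path xs are those of butlast (tl xs).\<close>
definition mutually_visible :: "'a set \<Rightarrow> ('a \<Rightarrow> 'a \<Rightarrow> bool) \<Rightarrow> 'a set \<Rightarrow> 'a \<Rightarrow> 'a \<Rightarrow> bool" where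
  "mutually_visible V E U x y \<longleftrightarrow>
     (\<exists>xs. shortest_path V E x y xs \<and> set (butlast (tl xs)) \<inter> U = {})"

definition mv_set :: "'a set \<Rightarrow> ('a \<Rightarrow> 'a \<Rightarrow> bool) \<Rightarrow> 'a set \<Rightarrow> bool" where
  "mv_set V E U \<longleftrightarrow> U \<subseteq> V \<and>
     (\<forall>x\<in>U. \<forall>y\<in>U. x \<noteq> y \<longrightarrow> mutually_visible V E U x y)"

definition mv_number :: "'a set \<Rightarrow> ('a \<Rightarrow> 'a \<Rightarrow> bool) \<Rightarrow> nat" where
  "mv_number V E = Max {card U | U. mv_set V E U}"

end

theory Submission
  imports Defs
begin


definition cr :: "real^2 \<Rightarrow> real^2 \<Rightarrow> real" where
  "cr x y = x$1 * y$2 - x$2 * y$1"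

definition orient :: "real^2 \<Rightarrow> real^2 \<Rightarrow> real^2 \<Rightarrow> real" where
  "orient a b c = cr (b - a) (c - a)"

lemma inner2: "inner (x::real^2) y = x$1 * y$1 + x$2 * y$2"
  by (simp add: inner_vec_def sum_2)

lemma aux_div1: "(x1::real) \<noteq> 0 \<Longrightarrow> x1 * y2 = x2 * y1 \<Longrightarrow> y1 = y1 / x1 * x1 \<and> y2 = y1 / x1 * x2"
  by (simp add: field_simps)
lemma aux_div2: "(x2::real) \<noteq> 0 \<Longrightarrow> x1 * y2 = x2 * y1 \<Longrightarrow> y1 = y2 / x2 * x1 \<and> y2 = y2 / x2 * x2"
  by (simp add: field_simps)

lemma orient_zero_collinear:
  assumes "orient a b c = 0" "a \<noteq> b"
  shows "collinear {a, b, c}"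
proof -
  let ?B = "b - a" and ?C = "c - a"
  have h: "?B$1 * ?C$2 = ?B$2 * ?C$1" using assms(1) by (simp add: orient_def cr_def)
  have "?B \<noteq> 0" using assms(2) by simp
  have nz: "?B$1 \<noteq> 0 \<or> ?B$2 \<noteq> 0"
  proof (rule ccontr)
    assume "\<not> (?B$1 \<noteq> 0 \<or> ?B$2 \<noteq> 0)"
    then have "?B = 0" by (simp only: vec_eq_iff forall_2 zero_index) simp
    then show False using \<open>?B \<noteq> 0\<close> by simp
  qed
  have "\<exists>t. ?C = t *\<^sub>R ?B"
  proof (cases "?B$1 \<noteq> 0")
    case True
    show ?thesis
      apply (rule exI[of _ "?C$1 / ?B$1"])
      apply (simp only: vec_eq_iff forall_2 vector_scaleR_component)
      using aux_div1[OF True h] by simp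
  next
    case False
    then have "?B$2 \<noteq> 0" using nz by simp
    then show ?thesis
      apply -
      apply (rule exI[of _ "?C$2 / ?B$2"])
      apply (simp only: vec_eq_iff forall_2 vector_scaleR_component)
      using aux_div2[OF \<open>?B$2 \<noteq> 0\<close> h] by simp
  qed
  then have "collinear {0, b - a, c - a}" using collinear_lemma by blast
  moreover have "{a, b, c} = {b, a, c}" by blast
  ultimately show ?thesis using collinear_3[of b a c] by simp
qed

lemma orient_swap1: "orient a' b a = - orient a b a'"
  by (simp add: orient_def cr_def algebra_simps)
lemma orient_swap2: "orient b a c = - orient a b c"
  by (simp add: orient_def cr_def algebra_simps)
lemma ident1: "cr B C * inner u u = cr u C * inner u B - cr u B * inner u C"
  by (simp add: cr_def inner2 algebra_simps)
lemma ident2: "cr S P * inner u X = cr X P * inner u S + cr S X * inner u P"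
  by (simp add: cr_def inner2 algebra_simps)

locale cpos =
  fixes C :: "(real^2) set"
  assumes fin: "finite C" and gp: "general_position C" and cp: "convex_position C"
    and big: "card C \<ge> 10"
begin

lemma L_ext:
  assumes "x \<in> C" "S \<subseteq> C - {x}" "x \<in> convex hull S"
  shows False
proof -
  have "x extreme_point_of (convex hull C)" using cp assms(1) by (simp add: convex_position_def)
  then have cv: "convex (convex hull C - {x})"
    using extreme_point_of_stillconvex[of "convex hull C" x] by (simp add: convex_convex_hull)
  have "S \<subseteq> convex hull C - {x}" using assms(2) hull_subset[of C convex] by blast
  then have "convex hull S \<subseteq> convex hull C - {x}" using cv by (simp add: hull_minimal)
  then show False using assms(3) by blast
qed

lemma orient_nz:
  assumes "a \<in> C" "b \<in> C" "c \<in> C" "a \<noteq> b" "a \<noteq> c" "b \<noteq> c"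
  shows "orient a b c \<noteq> 0"
  using gp assms orient_zero_collinear unfolding general_position_def by blast

lemma expose:
  assumes "a \<in> C"
  shows "\<exists>u. \<forall>c \<in> C - {a}. inner u (c - a) > 0"
proof -
  have fin': "finite (C - {a})" using fin by simp
  have "a \<notin> convex hull (C - {a})" using L_ext[OF assms, of "C - {a}"] by blast
  moreover have "closed (convex hull (C - {a}))"
    using fin' by (simp add: compact_imp_closed finite_imp_compact_convex_hull)
  ultimately obtain u k where uk: "inner u a < k" "\<forall>x \<in> convex hull (C - {a}). inner u x > k"
    using separating_hyperplane_closed_point[of "convex hull (C - {a})" a] convex_convex_hull by blast
  have "\<forall>c \<in> C - {a}. inner u (c - a) > 0"
  proof
    fix c assume "c \<in> C - {a}"
    then have "inner u c > k" using uk(2) hull_subset[of "C - {a}" convex] by blast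
    then show "inner u (c - a) > 0" using uk(1) by (simp add: inner_diff_right)
  qed
  then show ?thesis by blast
qed

lemma next_ex:
  assumes "a \<in> C"
  shows "\<exists>b \<in> C - {a}. \<forall>c \<in> C - {a, b}. orient a b c > 0"
proof -
  obtain u where u: "\<forall>c \<in> C - {a}. inner u (c - a) > 0" using expose[OF assms] by blast
  define t where "t c = cr u (c - a) / inner u (c - a)" for c
  have fin': "finite (C - {a})" using fin by simp
  have "card (C - {a}) \<ge> 9" using big assms fin by simp
  then have ne: "C - {a} \<noteq> {}" by (metis card.empty not_numeral_le_zero)
  define m where "m = Min (t ` (C - {a}))"
  have "m \<in> t ` (C - {a})" unfolding m_def using fin' ne by simp
  then obtain b where b: "b \<in> C - {a}" "t b = m" by blast
  have bmin: "t b \<le> t c" if "c \<in> C - {a}" for c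
    using b(2) that fin' unfolding m_def by simp
  have "\<forall>c \<in> C - {a, b}. orient a b c > 0"
  proof
    fix c assume c: "c \<in> C - {a, b}"
    let ?B = "b - a" and ?C = "c - a"
    have pB: "inner u ?B > 0" using u b by blast
    have pC: "inner u ?C > 0" using u c by blast
    have "cr u ?B / inner u ?B \<le> cr u ?C / inner u ?C" using bmin[of c] c unfolding t_def by simp
    then have le: "cr u ?B * inner u ?C \<le> cr u ?C * inner u ?B"
      using pB pC by (simp add: divide_simps)
    have "u \<noteq> 0" using pB by auto
    then have uu: "inner u u > 0" by simp
    have "cr ?B ?C * inner u u \<ge> 0" using ident1[of ?B ?C u] le by simp
    then have "cr ?B ?C \<ge> 0" using uu by (simp add: zero_le_mult_iff)
    moreover have "orient a b c \<noteq> 0" using orient_nz[of a b c] assms b c by blast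
    ultimately show "orient a b c > 0" by (simp add: orient_def)
  qed
  then show ?thesis using b(1) by blast
qed

end


lemma orient_cyc: "orient p s x = cr (x - s) (p - s)"
  by (simp add: orient_def cr_def algebra_simps)

lemma orient_comb: "orient a b ((1 - s) *\<^sub>R c + s *\<^sub>R d) = (1 - s) * orient a b c + s * orient a b d"
  by (simp add: orient_def cr_def algebra_simps)

lemma orient_seg0: "orient a b ((1 - s) *\<^sub>R a + s *\<^sub>R b) = 0"
  by (simp add: orient_def cr_def algebra_simps)

context cpos
begin

definition nx where "nx a = (SOME b. b \<in> C - {a} \<and> (\<forall>c \<in> C - {a, b}. orient a b c > 0))"

lemma nx: assumes "a \<in> C" shows "nx a \<in> C" "nx a \<noteq> a" "\<And>c. c \<in> C \<Longrightarrow> c \<noteq> a \<Longrightarrow> c \<noteq> nx a \<Longrightarrow> orient a (nx a) c > 0"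
proof -
  have "nx a \<in> C - {a} \<and> (\<forall>c \<in> C - {a, nx a}. orient a (nx a) c > 0)"
    unfolding nx_def using someI_ex[OF next_ex[OF assms, unfolded Bex_def]] .
  then show "nx a \<in> C" "nx a \<noteq> a" "\<And>c. c \<in> C \<Longrightarrow> c \<noteq> a \<Longrightarrow> c \<noteq> nx a \<Longrightarrow> orient a (nx a) c > 0"
    by auto
qed

lemma nx_inj: assumes "a \<in> C" "a' \<in> C" "nx a = nx a'" shows "a = a'"
proof (rule ccontr)
  assume ne: "a \<noteq> a'"
  have "orient a (nx a) a' > 0" using nx[OF assms(1)] nx[OF assms(2)] assms ne by metis
  moreover have "orient a' (nx a) a > 0" using nx[OF assms(1)] nx[OF assms(2)] assms ne by metis
  ultimately show False using orient_swap1[of a' "nx a" a] by simp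
qed

lemma three: assumes "a \<in> C" "b \<in> C" shows "\<exists>c \<in> C. c \<noteq> a \<and> c \<noteq> b"
proof -
  have c2: "card {a, b} \<le> 2" by (cases "a = b") auto
  have "card C - card {a, b} \<le> card (C - {a, b})" by (rule diff_card_le_card_Diff) simp
  then have "card (C - {a, b}) \<ge> 8" using big c2 by linarith
  then have "C - {a, b} \<noteq> {}" by (metis card.empty not_numeral_le_zero)
  then show ?thesis by blast
qed

lemma nx_no2: assumes "a \<in> C" shows "nx (nx a) \<noteq> a"
proof
  assume h: "nx (nx a) = a"
  obtain c where c: "c \<in> C" "c \<noteq> a" "c \<noteq> nx a" using three[OF assms nx(1)[OF assms]] by blast
  have "orient a (nx a) c > 0" using nx(3)[OF assms c] .
  moreover have "orient (nx a) a c > 0" using nx(3)[OF nx(1)[OF assms], of c] c h by simp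
  ultimately show False using orient_swap2[of "nx a" a c] by simp
qed

lemma cycle:
  assumes S: "S \<subseteq> C" "S \<noteq> {}" "\<forall>s\<in>S. nx s \<in> S" "\<forall>s\<in>S. \<exists>p\<in>S. nx p = s"
  shows "S = C"
proof (rule ccontr)
  assume "S \<noteq> C"
  then obtain x where x: "x \<in> C" "x \<notin> S" using S(1) by blast
  have finS: "finite S" using finite_subset[OF S(1) fin] .
  have "x \<notin> convex hull S" using L_ext[OF x(1), of S] S(1) x(2) by blast
  moreover have "closed (convex hull S)"
    using finS by (simp add: compact_imp_closed finite_imp_compact_convex_hull)
  ultimately obtain u k where uk: "inner u x < k" "\<forall>y \<in> convex hull S. inner u y > k"
    using separating_hyperplane_closed_point[of "convex hull S" x] convex_convex_hull by blast
  have uS: "inner u y > inner u x" if "y \<in> S" for y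
    using uk that hull_subset[of S convex] by fastforce
  define m where "m = Min ((\<lambda>y. inner u y) ` S)"
  have "m \<in> (\<lambda>y. inner u y) ` S" unfolding m_def using finS S(2) by simp
  then obtain s0 where s0: "s0 \<in> S" "inner u s0 = m" by blast
  have s0min: "inner u s0 \<le> inner u y" if "y \<in> S" for y
    using s0(2) that finS unfolding m_def by simp
  define s1 where "s1 = nx s0"
  obtain p where p: "p \<in> S" "nx p = s0" using S(4) s0(1) by blast
  have s0C: "s0 \<in> C" and s1C: "s1 \<in> C" and pC: "p \<in> C" and s1S: "s1 \<in> S"
    using S s0 p nx unfolding s1_def by auto
  have s10: "s1 \<noteq> s0" using nx(2)[OF s0C] s1_def by simp
  have ps0: "p \<noteq> s0" using nx(2)[OF pC] p by simp
  have ps1: "p \<noteq> s1" using nx_no2[OF pC] p s1_def by simp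
  have xs: "x \<noteq> s0" "x \<noteq> s1" "x \<noteq> p" using x s0 s1S p by auto
  have o1: "orient s0 s1 x > 0" using nx(3)[OF s0C x(1)] xs unfolding s1_def by simp
  have o2: "orient s0 s1 p > 0" using nx(3)[OF s0C pC] ps0 ps1 unfolding s1_def by simp
  have o3: "orient p s0 x > 0" using nx(3)[OF pC x(1)] xs p by simp
  have "cr (s1 - s0) (p - s0) * inner u (x - s0)
      = cr (x - s0) (p - s0) * inner u (s1 - s0) + cr (s1 - s0) (x - s0) * inner u (p - s0)"
    by (rule ident2)
  moreover have "cr (s1 - s0) (p - s0) * inner u (x - s0) < 0"
    using o2 uS[OF s0(1)] by (simp add: orient_def inner_diff_right mult_pos_neg)
  moreover have "cr (x - s0) (p - s0) * inner u (s1 - s0) \<ge> 0"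
    using o3 s0min[OF s1S] by (simp add: orient_cyc inner_diff_right)
  moreover have "cr (s1 - s0) (x - s0) * inner u (p - s0) \<ge> 0"
    using o1 s0min[OF p(1)] by (simp add: orient_def inner_diff_right)
  ultimately show False by linarith
qed

end


context cpos
begin

definition a0 where "a0 = (SOME a. a \<in> C)"
definition it where "it k = (nx ^^ k) a0"

lemma a0C: "a0 \<in> C"
proof -
  have "C \<noteq> {}" using big by (metis card.empty not_numeral_le_zero)
  then show ?thesis unfolding a0_def by (simp add: some_in_eq)
qed

lemma it_C: "it k \<in> C"
  by (induction k) (auto simp: it_def a0C nx(1))

lemma it_Suc: "it (Suc k) = nx (it k)"
  by (simp add: it_def)

lemma it_shift: "it i = it j \<Longrightarrow> i \<le> j \<Longrightarrow> it 0 = it (j - i)"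
proof (induction i arbitrary: j)
  case 0
  then show ?case by simp
next
  case (Suc i)
  then obtain j' where j: "j = Suc j'" by (cases j) auto
  have "nx (it i) = nx (it j')" using Suc.prems j by (simp add: it_Suc)
  then have "it i = it j'" using nx_inj it_C by blast
  then show ?case using Suc j by simp
qed

lemma it_dist: assumes "i < j" "j < 10" shows "it i \<noteq> it j"
proof
  assume h: "it i = it j"
  define m where "m = j - i"
  have m: "0 < m" "m < 10" using assms unfolding m_def by auto
  have itm: "it m = it 0" using it_shift[OF h] assms unfolding m_def by simp
  define S where "S = it ` {..<m}"
  have "S = C"
  proof (rule cycle)
    show "S \<subseteq> C" unfolding S_def using it_C by blast
    show "S \<noteq> {}" unfolding S_def using m by blast
    show "\<forall>s\<in>S. nx s \<in> S"
    proof
      fix s assume "s \<in> S"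
      then obtain k where k: "k < m" "s = it k" unfolding S_def by blast
      show "nx s \<in> S"
      proof (cases "Suc k < m")
        case True
        then show ?thesis unfolding S_def using k by (auto simp: it_Suc[symmetric])
      next
        case False
        then have "Suc k = m" using k by simp
        then have "nx s = it 0" using k itm by (simp add: it_Suc[symmetric])
        then show ?thesis unfolding S_def using m by blast
      qed
    qed
    show "\<forall>s\<in>S. \<exists>p\<in>S. nx p = s"
    proof
      fix s assume "s \<in> S"
      then obtain k where k: "k < m" "s = it k" unfolding S_def by blast
      show "\<exists>p\<in>S. nx p = s"
      proof (cases k)
        case 0
        have "nx (it (m - 1)) = it m" using m by (simp add: it_Suc[symmetric])
        moreover have "it (m - 1) \<in> S" unfolding S_def using m by simp
        ultimately show ?thesis using k 0 itm by auto
      next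
        case (Suc k')
        have "nx (it k') = it k" using Suc by (simp add: it_Suc)
        moreover have "it k' \<in> S" unfolding S_def using k Suc by simp
        ultimately show ?thesis using k by auto
      qed
    qed
  qed
  moreover have "card S \<le> m" unfolding S_def using card_image_le[of "{..<m}" it] by simp
  ultimately show False using big m by simp
qed

lemma it_inj: "i < 10 \<Longrightarrow> j < 10 \<Longrightarrow> it i = it j \<Longrightarrow> i = j"
  using it_dist by (metis linorder_neqE_nat)

lemma sep_disj:
  assumes "a \<in> C" "c \<in> C" "d \<in> C" "c \<noteq> a" "c \<noteq> nx a" "d \<noteq> a" "d \<noteq> nx a"
  shows "closed_segment a (nx a) \<inter> closed_segment c d = {}"
proof (rule ccontr)
  assume "closed_segment a (nx a) \<inter> closed_segment c d \<noteq> {}"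
  then obtain z where z: "z \<in> closed_segment a (nx a)" "z \<in> closed_segment c d" by blast
  obtain t where t: "z = (1 - t) *\<^sub>R a + t *\<^sub>R nx a" using z(1) by (auto simp: in_segment)
  obtain s where s: "0 \<le> s" "s \<le> 1" "z = (1 - s) *\<^sub>R c + s *\<^sub>R d" using z(2) by (auto simp: in_segment)
  have "orient a (nx a) z = 0" using t orient_seg0 by simp
  moreover have "orient a (nx a) c > 0" "orient a (nx a) d > 0" using nx(3)[OF assms(1)] assms by auto
  then have "orient a (nx a) z > 0"
  proof -
    have "(1 - s) * orient a (nx a) c + s * orient a (nx a) d > 0"
    proof (cases "s = 0")
      case True then show ?thesis using \<open>orient a (nx a) c > 0\<close> by simp
    next
      case False then have "s > 0" using s by simp
      then have "s * orient a (nx a) d > 0" using \<open>orient a (nx a) d > 0\<close> by simp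
      moreover have "(1 - s) * orient a (nx a) c \<ge> 0" using s \<open>orient a (nx a) c > 0\<close> by simp
      ultimately show ?thesis by linarith
    qed
    then show ?thesis using s(3) orient_comb by simp
  qed
  ultimately show False by simp
qed

lemma avoid:
  assumes "finite K" "card K \<le> 4"
  shows "\<exists>i<5. it (2*i) \<notin> K \<and> it (2*i+1) \<notin> K"
proof (rule ccontr)
  assume "\<not> ?thesis"
  then have all: "\<forall>i<5. it (2*i) \<in> K \<or> it (2*i+1) \<in> K" by blast
  define g where "g i = (if it (2*i) \<in> K then it (2*i) else it (2*i+1))" for i
  have gK: "g ` {..<5} \<subseteq> K" using all unfolding g_def by auto
  have "inj_on g {..<5}"
  proof (rule inj_onI)
    fix i j assume ij: "i \<in> {..<5::nat}" "j \<in> {..<5}" "g i = g j"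
    have "\<exists>p. (p = 2*i \<or> p = 2*i+1) \<and> g i = it p" unfolding g_def by (cases "it (2*i) \<in> K") auto
    then obtain p where p: "p = 2*i \<or> p = 2*i+1" "g i = it p" by blast
    have "\<exists>q. (q = 2*j \<or> q = 2*j+1) \<and> g j = it q" unfolding g_def by (cases "it (2*j) \<in> K") auto
    then obtain q where q: "q = 2*j \<or> q = 2*j+1" "g j = it q" by blast
    have "p < 10" "q < 10" using p q ij by auto
    then have "p = q" using it_inj ij p q by metis
    then show "i = j" using p q by auto
  qed
  then have "card (g ` {..<5}) = 5" by (simp add: card_image)
  then have "card K \<ge> 5" using card_mono[OF assms(1) gK] by simp
  then show False using assms by simp
qed

end


lemma segments_img: "segments P = (\<lambda>e. convex hull e) ` {e. e \<subseteq> P \<and> card e = 2}"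
proof
  show "segments P \<subseteq> (\<lambda>e. convex hull e) ` {e. e \<subseteq> P \<and> card e = 2}"
    unfolding segments_def by (auto simp: segment_convex_hull)
  show "(\<lambda>e. convex hull e) ` {e. e \<subseteq> P \<and> card e = 2} \<subseteq> segments P"
  proof
    fix s assume "s \<in> (\<lambda>e. convex hull e) ` {e. e \<subseteq> P \<and> card e = 2}"
    then obtain e where e: "e \<subseteq> P" "card e = 2" "s = convex hull e" by blast
    then obtain a b where ab: "e = {a, b}" "a \<noteq> b" by (meson card_2_iff)
    then have "s = closed_segment a b" using e by (simp add: segment_convex_hull)
    then show "s \<in> segments P" unfolding segments_def using ab e by blast
  qed
qed

lemma card_segments:
  assumes "finite P" shows "card (segments P) = card P choose 2"
proof -
  have "inj_on (\<lambda>e. convex hull e) {e. e \<subseteq> P \<and> card e = 2}"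
  proof (rule inj_onI)
    fix e1 e2 assume h: "e1 \<in> {e. e \<subseteq> P \<and> card e = 2}" "e2 \<in> {e. e \<subseteq> P \<and> card e = 2}"
      "convex hull e1 = convex hull (e2 :: (real^2) set)"
    have "card e1 = 2" "card e2 = 2" using h(1,2) by simp_all
    then obtain a b c d where "e1 = {a, b}" "e2 = {c, d}" by (meson card_2_iff)
    then show "e1 = e2" using h(3) by (simp flip: segment_convex_hull)
  qed
  then have "card ((\<lambda>e. convex hull e) ` {e. e \<subseteq> P \<and> card e = 2}) = card {e. e \<subseteq> P \<and> card e = 2}"
    by (rule card_image)
  then show ?thesis unfolding segments_img using n_subsets[OF assms] by simp
qed

lemma finite_segments: "finite P \<Longrightarrow> finite (segments P)"
  unfolding segments_img by simp

context cpos
begin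

lemma small_part:
  assumes "M \<subseteq> C" "P \<subseteq> C" "M \<inter> P = {}" "convex hull M \<inter> convex hull P \<noteq> {}" "card M \<le> 1"
  shows False
proof -
  have finM: "finite M" using finite_subset[OF assms(1) fin] .
  show False
  proof (cases "M = {}")
    case True then show ?thesis using assms(4) by simp
  next
    case False
    then obtain x where x: "x \<in> M" by blast
    have "\<forall>a1\<in>M. \<forall>a2\<in>M. a1 = a2" using assms(5) finM card_le_Suc0_iff_eq[of M] by simp
    then have M: "M = {x}" using x by blast
    have "x \<in> convex hull P" using assms(4) M by simp
    moreover have "P \<subseteq> C - {x}" using assms(2,3) M by blast
    moreover have "x \<in> C" using assms(1) M by blast
    ultimately show ?thesis using L_ext by blast
  qed
qed

lemma radon4:
  assumes "H \<subseteq> C" "card H = 4"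
  shows "\<exists>x y z w. H = {x, y, z, w} \<and> x \<noteq> y \<and> x \<noteq> z \<and> x \<noteq> w \<and> y \<noteq> z \<and> y \<noteq> w \<and> z \<noteq> w
     \<and> closed_segment x y \<inter> closed_segment z w \<noteq> {}"
proof -
  have finH: "finite H" using finite_subset[OF assms(1) fin] .
  have "affine_dependent H" using affine_dependent_biggerset[OF finH] assms(2) by simp
  then obtain M P where MP: "M \<inter> P = {}" "M \<union> P = H" "convex hull M \<inter> convex hull P \<noteq> {}"
    using Radon_partition[OF finH] by blast
  have sub: "M \<subseteq> C" "P \<subseteq> C" using MP assms(1) by auto
  have fMP: "finite M" "finite P" using MP finH by (metis finite_Un)+
  have "card M + card P = 4" using card_Un_disjoint[OF fMP MP(1)] MP(2) assms(2) by simp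
  moreover have "\<not> card M \<le> 1" using small_part[OF sub MP(1) MP(3)] by blast
  moreover have "\<not> card P \<le> 1" using small_part[OF sub(2) sub(1) _ _] MP(1) MP(3) by (metis inf_commute)
  ultimately have "card M = 2" "card P = 2" by auto
  then obtain x y z w where M: "M = {x, y}" "x \<noteq> y" and P: "P = {z, w}" "z \<noteq> w"
    by (meson card_2_iff)
  have "H = {x, y, z, w}" using MP(2) M P by blast
  moreover have "x \<noteq> z \<and> x \<noteq> w \<and> y \<noteq> z \<and> y \<noteq> w" using MP(1) M P by blast
  moreover have "closed_segment x y \<inter> closed_segment z w \<noteq> {}"
    using MP(3) M P by (simp add: segment_convex_hull)
  ultimately show ?thesis using M P by blast
qed

end


definition optA :: "'a set \<Rightarrow> 'a set set \<Rightarrow> bool" where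
  "optA C E \<longleftrightarrow> (\<exists>H. H \<subseteq> C \<and> card H = 4 \<and> (\<forall>e\<in>E. e \<inter> H \<noteq> {}) \<and> (\<forall>e\<in>E. \<not> e \<subseteq> H))"

definition optB :: "'a set \<Rightarrow> 'a set set \<Rightarrow> bool" where
  "optB C E \<longleftrightarrow> (\<exists>p a b. p \<in> C \<and> a \<in> C \<and> b \<in> C \<and> p \<noteq> a \<and> p \<noteq> b \<and> a \<noteq> b \<and>
      (\<forall>e\<in>E. p \<in> e \<or> a \<in> e \<or> b \<in> e) \<and> {p, a} \<notin> E \<and> {p, b} \<notin> E)"

lemma fresh:
  assumes "finite C" "card C \<ge> 10" "finite X" "card X \<le> 9"
  shows "\<exists>p\<in>C. p \<notin> X"
proof (rule ccontr)
  assume "\<not> ?thesis"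
  then have "C \<subseteq> X" by blast
  then have "card C \<le> card X" using assms(3) card_mono by blast
  then show False using assms by simp
qed

lemma union_card:
  assumes "finite E" "\<forall>e\<in>E. card e = 2"
  shows "card (\<Union>E) \<le> 2 * card E"
proof -
  have "card (\<Union>E) \<le> sum card E" by (rule card_Union_le_sum_card)
  also have "sum card E = 2 * card E" using assms(2) by simp
  finally show ?thesis .
qed

lemma comb:
  fixes C :: "'a set" and E :: "'a set set"
  assumes finC: "finite C" and bigC: "card C \<ge> 10" and finE: "finite E" and cE: "card E \<le> 4"
    and edges: "\<forall>e\<in>E. \<exists>x y. e = {x, y} \<and> x \<noteq> y \<and> x \<in> C \<and> y \<in> C"
  shows "optA C E \<or> optB C E"
proof -
  have c2: "\<forall>e\<in>E. card e = 2"
  proof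
    fix e assume "e \<in> E"
    then obtain x y where "e = {x, y}" "x \<noteq> y" using edges by blast
    then show "card e = 2" by simp
  qed
  have UC: "\<Union>E \<subseteq> C"
  proof
    fix z assume "z \<in> \<Union>E"
    then obtain e where e: "e \<in> E" "z \<in> e" by blast
    then obtain x y where "e = {x, y}" "x \<in> C" "y \<in> C" using edges by blast
    then show "z \<in> C" using e by blast
  qed
  have finU: "finite (\<Union>E)" using finite_subset[OF UC finC] .
  have cU: "card (\<Union>E) \<le> 8" using union_card[OF finE c2] cE by simp
  show ?thesis
  proof (cases "\<forall>e1\<in>E. \<forall>e2\<in>E. e1 \<noteq> e2 \<longrightarrow> e1 \<inter> e2 = {}")
    case True
    define f where "f e = (SOME x. x \<in> e)" for e :: "'a set"
    have fe: "f e \<in> e" if "e \<in> E" for e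
    proof -
      have "card e = 2" using that c2 by blast
      then have "e \<noteq> {}" by auto
      then show ?thesis unfolding f_def by (simp add: some_in_eq)
    qed
    have injf: "inj_on f E"
    proof (rule inj_onI)
      fix e1 e2 assume h: "e1 \<in> E" "e2 \<in> E" "f e1 = f e2"
      have "f e1 \<in> e1 \<inter> e2" using fe[OF h(1)] fe[OF h(2)] h(3) by simp
      then have "e1 \<inter> e2 \<noteq> {}" by blast
      then show "e1 = e2" using True h(1,2) by meson
    qed
    define H0 where "H0 = f ` E"
    have cH0: "card H0 = card E" unfolding H0_def using injf by (simp add: card_image)
    have H0U: "H0 \<subseteq> \<Union>E" unfolding H0_def using fe by blast
    have "card (C - \<Union>E) \<ge> 4 - card E"
    proof -
      have "card C - card (\<Union>E) \<le> card (C - \<Union>E)" by (rule diff_card_le_card_Diff[OF finU])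
      moreover have "card (\<Union>E) \<le> 2 * card E" using union_card[OF finE c2] .
      ultimately show ?thesis using bigC cE by linarith
    qed
    then obtain G where G: "G \<subseteq> C - \<Union>E" "card G = 4 - card E"
      by (meson obtain_subset_with_card_n)
    define H where "H = H0 \<union> G"
    have finG: "finite G" using finite_subset[OF G(1)] finC by simp
    have finH0: "finite H0" using finite_subset[OF H0U finU] .
    have "card H = 4"
    proof -
      have "H0 \<inter> G = {}" using H0U G(1) by blast
      then have "card H = card H0 + card G" unfolding H_def using card_Un_disjoint[OF finH0 finG] by simp
      then show ?thesis using cH0 G(2) cE by simp
    qed
    moreover have "H \<subseteq> C" unfolding H_def using H0U UC G(1) by blast
    moreover have "\<forall>e\<in>E. e \<inter> H \<noteq> {}" unfolding H_def H0_def using fe by blast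
    moreover have "\<forall>e\<in>E. \<not> e \<subseteq> H"
    proof (intro ballI notI)
      fix e assume e: "e \<in> E" "e \<subseteq> H"
      obtain x y where xy: "e = {x, y}" "x \<noteq> y" using edges e(1) by blast
      have "e \<inter> G = {}" using G(1) e(1) by blast
      then have "e \<subseteq> H0" using e(2) unfolding H_def by blast
      then obtain ex ey where "ex \<in> E" "x = f ex" "ey \<in> E" "y = f ey" unfolding H0_def using xy by blast
      moreover have "x \<in> e" "y \<in> e" using xy by auto
      ultimately have "x \<in> ex \<inter> e" "y \<in> ey \<inter> e" using fe by auto
      then have i1: "ex \<inter> e \<noteq> {}" and i2: "ey \<inter> e \<noteq> {}" by blast+
      have "ex = e" using True e(1) \<open>ex \<in> E\<close> i1 by meson
      moreover have "ey = e" using True e(1) \<open>ey \<in> E\<close> i2 by meson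
      ultimately have "x = y" using \<open>x = f ex\<close> \<open>y = f ey\<close> by simp
      then show False using xy(2) by simp
    qed
    ultimately show ?thesis unfolding optA_def by blast
  next
    case False
    then obtain e1 e2 where e12: "e1 \<in> E" "e2 \<in> E" "e1 \<noteq> e2" "e1 \<inter> e2 \<noteq> {}" by blast
    then obtain v where v: "v \<in> e1" "v \<in> e2" by blast
    obtain x where ex: "e1 = {v, x}" "x \<noteq> v"
      using edges e12(1) v(1) by (metis insert_commute insertE singletonD)
    obtain y where ey: "e2 = {v, y}" "y \<noteq> v"
      using edges e12(2) v(2) by (metis insert_commute insertE singletonD)
    have xy: "x \<noteq> y" using ex ey e12(3) by blast
    have vC: "v \<in> C" "x \<in> C" "y \<in> C" using UC e12 ex ey by auto
    define R where "R = E - {e1, e2}"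
    have ER: "E = {e1, e2} \<union> R" unfolding R_def using e12 by blast
    have finR: "finite R" unfolding R_def using finE by simp
    have cR: "card R \<le> 2"
    proof -
      have "card R = card E - card {e1, e2}" unfolding R_def
        using card_Diff_subset[of "{e1, e2}" E] e12 by simp
      then show ?thesis using cE e12(3) by simp
    qed
    show ?thesis
    proof (cases "\<exists>u\<in>C. u \<noteq> v \<and> (\<forall>e\<in>R. v \<in> e \<or> u \<in> e)")
      case True
      then obtain u where u: "u \<in> C" "u \<noteq> v" "\<forall>e\<in>R. v \<in> e \<or> u \<in> e" by blast
      have "card (insert u (\<Union>E)) \<le> 9" using cU finU by (simp add: card_insert_if)
      then obtain p where p: "p \<in> C" "p \<notin> insert u (\<Union>E)"
        using fresh[OF finC bigC] finU by (meson finite_insert)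
      have "p \<noteq> v" using p e12(1) v(1) by blast
      moreover have "{p, v} \<notin> E" "{p, u} \<notin> E" using p by blast+
      moreover have "\<forall>e\<in>E. p \<in> e \<or> v \<in> e \<or> u \<in> e" using ER u(3) v by blast
      ultimately show ?thesis unfolding optB_def using p u vC by blast
    next
      case noU: False
      have Rne: "R \<noteq> {}"
      proof
        assume "R = {}"
        moreover obtain u where "u \<in> C" "u \<noteq> v" using vC ex by blast
        ultimately show False using noU by blast
      qed
      then obtain r1 where r1: "r1 \<in> R" by blast
      have "R - {r1} \<noteq> {}"
      proof
        assume h: "R - {r1} = {}"
        obtain s t where st: "r1 = {s, t}" "s \<noteq> t" "s \<in> C" "t \<in> C" using edges r1 ER by blast
        have "s \<noteq> v \<or> t \<noteq> v" using st by blast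
        then show False using noU h st by blast
      qed
      then obtain r2 where r2: "r2 \<in> R" "r2 \<noteq> r1" by blast
      have R12: "R = {r1, r2}"
      proof -
        have "{r1, r2} \<subseteq> R" using r1 r2 by blast
        moreover have "card {r1, r2} = 2" using r2 by simp
        ultimately show ?thesis using cR finR by (metis card_subset_eq le_antisym card_mono)
      qed
      have E4: "E = {e1, e2, r1, r2}" using ER R12 by blast
      obtain s1 t1 where st1: "r1 = {s1, t1}" "s1 \<noteq> t1" "s1 \<in> C" "t1 \<in> C" using edges r1 ER by blast
      obtain s2 t2 where st2: "r2 = {s2, t2}" "s2 \<noteq> t2" "s2 \<in> C" "t2 \<in> C" using edges r2 ER by blast
      have nv1: "v \<notin> r1"
      proof
        assume "v \<in> r1"
        have "s2 \<noteq> v \<or> t2 \<noteq> v" using st2 by blast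
        then show False using noU R12 \<open>v \<in> r1\<close> st2 by blast
      qed
      have nv2: "v \<notin> r2"
      proof
        assume "v \<in> r2"
        have "s1 \<noteq> v \<or> t1 \<noteq> v" using st1 by blast
        then show False using noU R12 \<open>v \<in> r2\<close> st1 by blast
      qed
      have disj: "r1 \<inter> r2 = {}"
      proof
        show "r1 \<inter> r2 \<subseteq> {}"
        proof
          fix w assume w: "w \<in> r1 \<inter> r2"
          have "w \<in> C" "w \<noteq> v" using w st1 nv1 by auto
          then show "w \<in> {}" using noU R12 w by blast
        qed
      qed simp
      have tri: "optB C E" if rxy: "r = {x, y}" and rr: "{r, r'} = {r1, r2}" for r r'
      proof -
        have r': "r' \<in> E" "r' \<inter> r = {}" "v \<notin> r'" using rr disj nv1 nv2 E4 by (auto simp: doubleton_eq_iff)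
        obtain s t where st: "r' = {s, t}" "s \<noteq> t" "s \<in> C" "t \<in> C" using edges r' by blast
        have Er: "E = {e1, e2, r, r'}" using E4 rr by blast
        have sxy: "s \<noteq> x" "s \<noteq> y" "s \<noteq> v" using r' st rxy by auto
        have "{s, x} \<notin> E"
        proof
          assume "{s, x} \<in> E"
          then show False using Er ex ey rxy st sxy r' by (auto simp: doubleton_eq_iff)
        qed
        moreover have "{s, y} \<notin> E"
        proof
          assume "{s, y} \<in> E"
          then show False using Er ex ey rxy st sxy r' by (auto simp: doubleton_eq_iff)
        qed
        moreover have "\<forall>e\<in>E. s \<in> e \<or> x \<in> e \<or> y \<in> e" using Er ex ey rxy st by auto
        ultimately show ?thesis unfolding optB_def using st sxy xy vC by blast
      qed
      show ?thesis
      proof (cases "r1 = {x, y} \<or> r2 = {x, y}")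
        case True
        then show ?thesis using tri[of r1 r2] tri[of r2 r1] by (auto simp: insert_commute)
      next
        case False
        obtain a1 where a1: "a1 \<in> r1" "a1 \<noteq> x" "a1 \<noteq> y"
          using False st1 by blast
        obtain a2 where a2: "a2 \<in> r2" "a2 \<noteq> x" "a2 \<noteq> y"
          using False st2 by blast
        obtain f where f: "f \<in> C" "f \<notin> \<Union>E" using fresh[OF finC bigC finU] cU by auto
        define H where "H = {v, a1, a2, f}"
        have dist: "v \<noteq> a1" "v \<noteq> a2" "a1 \<noteq> a2" "f \<noteq> v" "f \<noteq> a1" "f \<noteq> a2"
          using a1 a2 nv1 nv2 disj f E4 e12 v r1 r2 ER by blast+
        have "card H = 4" unfolding H_def using dist by auto
        moreover have "H \<subseteq> C" unfolding H_def using vC a1 a2 st1 st2 f by blast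
        moreover have "\<forall>e\<in>E. e \<inter> H \<noteq> {}" unfolding H_def using E4 v a1 a2 by blast
        moreover have "\<forall>e\<in>E. \<not> e \<subseteq> H"
        proof (intro ballI notI)
          fix e assume e: "e \<in> E" "e \<subseteq> H"
          have "f \<notin> e" using f e(1) by blast
          then have eH: "e \<subseteq> {v, a1, a2}" using e(2) unfolding H_def by blast
          have "e = e1 \<or> e = e2 \<or> e = r1 \<or> e = r2" using E4 e(1) by blast
          then show False
          proof (elim disjE)
            assume "e = e1" then have "x \<in> {v, a1, a2}" using eH ex by blast
            then show False using ex a1 a2 by blast
          next
            assume "e = e2" then have "y \<in> {v, a1, a2}" using eH ey by blast
            then show False using ey a1 a2 by blast
          next
            assume "e = r1" then have "r1 \<subseteq> {a1}" using eH nv1 disj a2 by blast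
            then show False using st1 by blast
          next
            assume "e = r2" then have "r2 \<subseteq> {a2}" using eH nv2 disj a1 by blast
            then show False using st2 by blast
          qed
        qed
        ultimately show ?thesis unfolding optA_def by blast
      qed
    qed
  qed
qed


lemma walk_ge3:
  assumes "walk V E ys" "hd ys = s" "last ys = t" "s \<noteq> t" "\<not> E s t"
  shows "length ys \<ge> 3"
proof (rule ccontr)
  assume "\<not> length ys \<ge> 3"
  then have l: "length ys < 3" by simp
  have ne: "ys \<noteq> []" using assms(1) unfolding walk_def by simp
  show False
  proof (cases "length ys = 1")
    case True
    then obtain a where "ys = [a]" by (metis One_nat_def length_0_conv length_Suc_conv)
    then show False using assms(2-4) by simp
  next
    case False
    moreover have "length ys \<noteq> 0" using ne by simp
    ultimately have "length ys = 2" using l by linarith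
    then obtain a b where ab: "ys = [a, b]" by (metis One_nat_def length_0_conv length_Suc_conv numeral_2_eq_2)
    have "E (ys ! 0) (ys ! Suc 0)" using assms(1) ab unfolding walk_def by simp
    then show False using ab assms(2,3,5) by simp
  qed
qed

lemma sp2:
  assumes "s \<in> V" "t \<in> V" "E s t" "s \<noteq> t"
  shows "shortest_path V E s t [s, t]"
  unfolding shortest_path_def
proof (intro conjI allI impI)
  show "walk V E [s, t]" unfolding walk_def using assms by (auto simp: less_Suc_eq)
  fix ys assume h: "walk V E ys \<and> hd ys = s \<and> last ys = t"
  have "ys \<noteq> []" using h unfolding walk_def by simp
  then have "length ys \<noteq> 1" using h assms(4) by (cases ys) auto
  moreover have "0 < length ys" using \<open>ys \<noteq> []\<close> by simp
  ultimately have "2 \<le> length ys" by linarith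
  then show "length [s, t] \<le> length ys" by simp
qed simp_all

lemma sp3:
  assumes "s \<in> V" "w \<in> V" "t \<in> V" "E s w" "E w t" "s \<noteq> t" "\<not> E s t"
  shows "shortest_path V E s t [s, w, t]"
  unfolding shortest_path_def
proof (intro conjI allI impI)
  show "walk V E [s, w, t]" unfolding walk_def using assms
    by (auto simp: less_Suc_eq nth_Cons split: nat.splits)
  fix ys assume h: "walk V E ys \<and> hd ys = s \<and> last ys = t"
  then show "length [s, w, t] \<le> length ys" using walk_ge3[of V E ys s t] assms by simp
qed simp_all

lemma len3:
  assumes "length xs = 3" obtains a b c where "xs = [a, b, c]"
  using assms by (metis length_0_conv length_Suc_conv numeral_3_eq_3)

lemma card_ins_le: "finite A \<Longrightarrow> card (insert x A) \<le> Suc (card A)"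
  by (simp add: card_insert_if)

lemma card4: "card {a, b, c, d} \<le> 4"
proof -
  have "card {d} = 1" by simp
  moreover have "card {c, d} \<le> Suc (card {d})" by (rule card_ins_le) simp
  moreover have "card {b, c, d} \<le> Suc (card {c, d})" by (rule card_ins_le) simp
  moreover have "card {a, b, c, d} \<le> Suc (card {b, c, d})" by (rule card_ins_le) simp
  ultimately show ?thesis by linarith
qed

context cpos
begin

abbreviation "V \<equiv> segments C"

lemma seg_in_V: "x \<in> C \<Longrightarrow> y \<in> C \<Longrightarrow> x \<noteq> y \<Longrightarrow> closed_segment x y \<in> V"
  unfolding segments_def by blast

lemma hull_edge:
  assumes "finite K" "card K \<le> 4"
  shows "\<exists>h \<in> V. \<forall>a b. a \<in> K \<longrightarrow> b \<in> K \<longrightarrow> a \<in> C \<longrightarrow> b \<in> C \<longrightarrow> h \<inter> closed_segment a b = {}"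
proof -
  obtain i where i: "i < 5" "it (2*i) \<notin> K" "it (2*i+1) \<notin> K" using avoid[OF assms] by blast
  define a' where "a' = it (2*i)"
  have na: "nx a' = it (2*i+1)" unfolding a'_def by (simp add: it_Suc)
  have a'C: "a' \<in> C" unfolding a'_def by (rule it_C)
  have "closed_segment a' (nx a') \<in> V" using seg_in_V[OF a'C nx(1)[OF a'C] nx(2)[OF a'C, symmetric]] .
  moreover have "closed_segment a' (nx a') \<inter> closed_segment a b = {}"
    if "a \<in> K" "b \<in> K" "a \<in> C" "b \<in> C" for a b
    using sep_disj[OF a'C that(3,4)] that i na unfolding a'_def by metis
  ultimately show ?thesis by blast
qed

end


context cpos
begin

definition W0 where "W0 = (\<lambda>i. closed_segment (it (2*i)) (it (2*i+1))) ` {..<5}"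

lemma W0_sub: "W0 \<subseteq> V"
proof
  fix w assume "w \<in> W0"
  then obtain i where i: "i < 5" "w = closed_segment (it (2*i)) (it (2*i+1))" unfolding W0_def by blast
  have "it (2*i) \<noteq> it (2*i+1)" using it_dist[of "2*i" "2*i+1"] i by simp
  then show "w \<in> V" using seg_in_V[OF it_C it_C] i by simp
qed

lemma card_W0: "card W0 = 5"
proof -
  have "inj_on (\<lambda>i. closed_segment (it (2*i)) (it (2*i+1))) {..<5}"
  proof (rule inj_onI)
    fix i j assume ij: "i \<in> {..<5::nat}" "j \<in> {..<5}"
      "closed_segment (it (2*i)) (it (2*i+1)) = closed_segment (it (2*j)) (it (2*j+1))"
    then have "{it (2*i), it (2*i+1)} = {it (2*j), it (2*j+1)}" by simp
    then have "it (2*i) = it (2*j) \<or> it (2*i) = it (2*j+1)" by blast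
    moreover have "2*i < 10" "2*j < 10" "2*j+1 < 10" using ij by auto
    ultimately have "2*i = 2*j \<or> 2*i = 2*j+1" using it_inj by blast
    then show "i = j" by presburger
  qed
  then show ?thesis unfolding W0_def by (simp add: card_image)
qed

lemma ends_C: "s \<in> V \<Longrightarrow> \<exists>a b. a \<in> C \<and> b \<in> C \<and> a \<noteq> b \<and> s = closed_segment a b"
  unfolding segments_def by blast

lemma lower: "mv_set V disj_adj (V - W0)"
  unfolding mv_set_def
proof (intro conjI ballI impI)
  show "V - W0 \<subseteq> V" by blast
  fix s t assume st: "s \<in> V - W0" "t \<in> V - W0" "s \<noteq> t"
  obtain a b where ab: "a \<in> C" "b \<in> C" "s = closed_segment a b" using ends_C st(1) by blast
  obtain c d where cd: "c \<in> C" "d \<in> C" "t = closed_segment c d" using ends_C st(2) by blast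
  show "mutually_visible V disj_adj (V - W0) s t"
  proof (cases "disj_adj s t")
    case True
    have "shortest_path V disj_adj s t [s, t]" using sp2[of s V t disj_adj] st True by blast
    then show ?thesis unfolding mutually_visible_def by fastforce
  next
    case False
    obtain i where i: "i < 5" "it (2*i) \<notin> {a, b, c, d}" "it (2*i+1) \<notin> {a, b, c, d}"
      using avoid[of "{a, b, c, d}"] card4[of a b c d] by blast
    define a' where "a' = it (2*i)"
    have na: "nx a' = it (2*i+1)" unfolding a'_def by (simp add: it_Suc)
    have a'C: "a' \<in> C" unfolding a'_def by (rule it_C)
    define h where "h = closed_segment a' (nx a')"
    have "h = closed_segment (it (2*i)) (it (2*i+1))" unfolding h_def using na a'_def by simp
    then have hW: "h \<in> W0" unfolding W0_def using i(1) by blast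
    have hV: "h \<in> V" using hW W0_sub by blast
    have "h \<inter> s = {}" unfolding h_def ab using sep_disj[OF a'C ab(1,2)] i na unfolding a'_def by auto
    moreover have "h \<inter> t = {}" unfolding h_def cd using sep_disj[OF a'C cd(1,2)] i na unfolding a'_def by auto
    ultimately have "disj_adj s h" "disj_adj h t" unfolding disj_adj_def by blast+
    then have "shortest_path V disj_adj s t [s, h, t]"
      using sp3[of s V h t disj_adj] st hV False by blast
    moreover have "set (butlast (tl [s, h, t])) \<inter> (V - W0) = {}" using hW by simp
    ultimately show ?thesis unfolding mutually_visible_def by blast
  qed
qed

end


context cpos
begin

lemma bad_pair:
  assumes mv: "mv_set V disj_adj U" and W: "W = V - U"
    and kC: "k1 \<in> C" "k2 \<in> C" "k3 \<in> C" "k4 \<in> C" "k1 \<noteq> k2" "k3 \<noteq> k4"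
    and nW: "closed_segment k1 k2 \<notin> W" "closed_segment k3 k4 \<notin> W"
    and ne: "closed_segment k1 k2 \<noteq> closed_segment k3 k4"
    and int: "closed_segment k1 k2 \<inter> closed_segment k3 k4 \<noteq> {}"
    and cov: "\<forall>w\<in>W. w \<inter> {k1, k2, k3, k4} \<noteq> {}"
  shows False
proof -
  define s where "s = closed_segment k1 k2"
  define t where "t = closed_segment k3 k4"
  have sV: "s \<in> V" and tV: "t \<in> V" unfolding s_def t_def using seg_in_V kC by auto
  have sU: "s \<in> U" and tU: "t \<in> U" using sV tV nW W unfolding s_def t_def by auto
  have nadj: "\<not> disj_adj s t" using int unfolding disj_adj_def s_def t_def by simp
  have "mutually_visible V disj_adj U s t" using mv sU tU ne unfolding mv_set_def s_def t_def by blast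
  then obtain xs where xs: "shortest_path V disj_adj s t xs" "set (butlast (tl xs)) \<inter> U = {}"
    unfolding mutually_visible_def by blast
  have wk: "walk V disj_adj xs" "hd xs = s" "last xs = t" using xs(1) unfolding shortest_path_def by auto
  have stne: "s \<noteq> t" using ne unfolding s_def t_def .
  have ge3: "length xs \<ge> 3" using walk_ge3[OF wk stne nadj] .
  obtain h where h: "h \<in> V" "\<forall>a b. a \<in> {k1, k2, k3, k4} \<longrightarrow> b \<in> {k1, k2, k3, k4} \<longrightarrow> a \<in> C \<longrightarrow> b \<in> C \<longrightarrow> h \<inter> closed_segment a b = {}"
  proof -
    have fK: "finite {k1, k2, k3, k4}" by simp
    from hull_edge[OF fK card4] show ?thesis using that by blast
  qed
  have "h \<inter> s = {}" "h \<inter> t = {}" using h(2) kC unfolding s_def t_def by auto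
  then have "disj_adj s h" "disj_adj h t" unfolding disj_adj_def by blast+
  then have "shortest_path V disj_adj s t [s, h, t]" using sp3[OF sV h(1) tV \<open>disj_adj s h\<close> \<open>disj_adj h t\<close> stne nadj] by blast
  then have "walk V disj_adj [s, h, t]" unfolding shortest_path_def by blast
  then have "length xs \<le> 3" using xs(1) unfolding shortest_path_def by fastforce
  then have "length xs = 3" using ge3 by simp
  then obtain a b c where abc: "xs = [a, b, c]" by (rule len3)
  have as: "a = s" and ct: "c = t" using wk abc by auto
  have bV: "b \<in> V" using wk(1) abc unfolding walk_def by simp
  have "disj_adj (xs ! 0) (xs ! Suc 0)" "disj_adj (xs ! 1) (xs ! Suc 1)"
    using wk(1) abc unfolding walk_def by auto
  then have adj: "s \<inter> b = {}" "b \<inter> t = {}" using abc as ct unfolding disj_adj_def by auto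
  have "b \<notin> U" using xs(2) abc by simp
  then have "b \<in> W" using W bV by simp
  then obtain k where k: "k \<in> b" "k \<in> {k1, k2, k3, k4}" using cov by blast
  have "k \<in> s \<or> k \<in> t" using k(2) unfolding s_def t_def by auto
  then show False using adj k(1) by blast
qed

lemma upper:
  assumes mv: "mv_set V disj_adj U"
  shows "card U + 5 \<le> card V"
proof (rule ccontr)
  assume "\<not> ?thesis"
  then have cU: "card V < card U + 5" by simp
  define W where "W = V - U"
  have UV: "U \<subseteq> V" using mv unfolding mv_set_def by blast
  have finV: "finite V" using finite_segments fin by blast
  have cW: "card W \<le> 4" unfolding W_def using card_Diff_subset[OF finite_subset[OF UV finV] UV] cU by simp
  define E where "E = {e. \<exists>x y. e = {x, y} \<and> x \<in> C \<and> y \<in> C \<and> x \<noteq> y \<and> closed_segment x y \<in> W}"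
  have finE: "finite E"
  proof -
    have "E \<subseteq> Pow C" unfolding E_def by blast
    moreover have "finite (Pow C)" using fin by simp
    ultimately show ?thesis by (rule finite_subset)
  qed
  have "inj_on (\<lambda>e. convex hull e) E"
  proof (rule inj_onI)
    fix e1 e2 assume h: "e1 \<in> E" "e2 \<in> E" "convex hull e1 = convex hull (e2 :: (real^2) set)"
    obtain a b c d where "e1 = {a, b}" "e2 = {c, d}" using h(1,2) unfolding E_def by blast
    then show "e1 = e2" using h(3) by (simp flip: segment_convex_hull)
  qed
  moreover have "(\<lambda>e. convex hull e) ` E \<subseteq> W" unfolding E_def by (auto simp flip: segment_convex_hull)
  moreover have "finite W" unfolding W_def using finV by simp
  ultimately have "card E \<le> card W" using card_inj_on_le by blast
  then have cE: "card E \<le> 4" using cW by simp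
  have edges: "\<forall>e\<in>E. \<exists>x y. e = {x, y} \<and> x \<noteq> y \<and> x \<in> C \<and> y \<in> C"
  proof
    fix e assume "e \<in> E"
    then obtain x y where "e = {x, y}" "x \<in> C" "y \<in> C" "x \<noteq> y"
      unfolding E_def mem_Collect_eq by (elim exE conjE)
    then show "\<exists>x y. e = {x, y} \<and> x \<noteq> y \<and> x \<in> C \<and> y \<in> C" by blast
  qed
  have memE: "closed_segment x y \<in> W" if xyE: "{x, y} \<in> E" for x y
  proof -
    obtain x' y' where "{x, y} = {x', y'}" "closed_segment x' y' \<in> W"
      using xyE unfolding E_def mem_Collect_eq by (elim exE conjE) blast
    then have eq: "closed_segment x y = closed_segment x' y'" by (simp only: closed_segment_eq)
    show ?thesis unfolding eq by fact
  qed
  have inE: "{x, y} \<in> E" if "x \<in> C" "y \<in> C" "x \<noteq> y" "closed_segment x y \<in> W" for x y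
    unfolding E_def using that by blast
  have Wcov: "\<exists>x y. {x, y} \<in> E \<and> x \<in> w \<and> y \<in> w" if "w \<in> W" for w
  proof -
    have "w \<in> V" using that W_def by simp
    then obtain x y where xy: "x \<in> C" "y \<in> C" "x \<noteq> y" "w = closed_segment x y" using ends_C by blast
    then have "{x, y} \<in> E" using that unfolding E_def by blast
    then show ?thesis using xy by auto
  qed
  have "card C \<ge> 10" using big .
  then have "optA C E \<or> optB C E" using comb[OF fin _ finE cE edges] by blast
  then show False
  proof
    assume "optA C E"
    then obtain H where H: "H \<subseteq> C" "card H = 4" "\<forall>e\<in>E. e \<inter> H \<noteq> {}" "\<forall>e\<in>E. \<not> e \<subseteq> H"
      unfolding optA_def by blast
    obtain x y z w where r: "H = {x, y, z, w}" "x \<noteq> y" "x \<noteq> z" "x \<noteq> w" "y \<noteq> z" "y \<noteq> w" "z \<noteq> w"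
      "closed_segment x y \<inter> closed_segment z w \<noteq> {}" using radon4[OF H(1,2)] by blast
    have C4: "x \<in> C" "y \<in> C" "z \<in> C" "w \<in> C" using H(1) r(1) by auto
    have n1: "closed_segment x y \<notin> W"
    proof
      assume "closed_segment x y \<in> W"
      then have "{x, y} \<in> E" by (rule inE[OF C4(1,2) r(2)])
      moreover have "{x, y} \<subseteq> H" "{z, w} \<subseteq> H" using r(1) by auto
      ultimately show False using H(4) by blast
    qed
    have n2: "closed_segment z w \<notin> W"
    proof
      assume "closed_segment z w \<in> W"
      then have "{z, w} \<in> E" by (rule inE[OF C4(3,4) r(7)])
      moreover have "{x, y} \<subseteq> H" "{z, w} \<subseteq> H" using r(1) by auto
      ultimately show False using H(4) by blast
    qed
    have ne: "closed_segment x y \<noteq> closed_segment z w" using r by (auto simp: doubleton_eq_iff)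
    have cov: "\<forall>w'\<in>W. w' \<inter> {x, y, z, w} \<noteq> {}"
    proof
      fix w' assume "w' \<in> W"
      then have "\<exists>x y. {x, y} \<in> E \<and> x \<in> w' \<and> y \<in> w'" by (rule Wcov)
      then obtain a b where ab: "{a, b} \<in> E" "a \<in> w'" "b \<in> w'" by (elim exE conjE)
      then have "{a, b} \<inter> H \<noteq> {}" using H(3) by blast
      then show "w' \<inter> {x, y, z, w} \<noteq> {}" using ab r(1) by blast
    qed
    show False using bad_pair[OF mv W_def C4 r(2) r(7) n1 n2 ne r(8) cov] .
  next
    assume "optB C E"
    then obtain p a b where B: "p \<in> C" "a \<in> C" "b \<in> C" "p \<noteq> a" "p \<noteq> b" "a \<noteq> b"
      "\<forall>e\<in>E. p \<in> e \<or> a \<in> e \<or> b \<in> e" "{p, a} \<notin> E" "{p, b} \<notin> E"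
      unfolding optB_def by (elim exE conjE) blast
    have n1: "closed_segment p a \<notin> W"
    proof
      assume "closed_segment p a \<in> W"
      then have "{p, a} \<in> E" by (rule inE[OF B(1,2,4)])
      then show False using B by blast
    qed
    have n2: "closed_segment p b \<notin> W"
    proof
      assume "closed_segment p b \<in> W"
      then have "{p, b} \<in> E" by (rule inE[OF B(1,3,5)])
      then show False using B by blast
    qed
    have ne: "closed_segment p a \<noteq> closed_segment p b" using B by (auto simp: doubleton_eq_iff)
    have int: "closed_segment p a \<inter> closed_segment p b \<noteq> {}" by auto
    have cov: "\<forall>w'\<in>W. w' \<inter> {p, a, p, b} \<noteq> {}"
    proof
      fix w' assume "w' \<in> W"
      then have "\<exists>x y. {x, y} \<in> E \<and> x \<in> w' \<and> y \<in> w'" by (rule Wcov)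
      then obtain c d where cd: "{c, d} \<in> E" "c \<in> w'" "d \<in> w'" by (elim exE conjE)
      have "p \<in> {c, d} \<or> a \<in> {c, d} \<or> b \<in> {c, d}" using B(7) cd(1) by (rule bspec)
      then show "w' \<inter> {p, a, p, b} \<noteq> {}" using cd by blast
    qed
    show False using bad_pair[OF mv W_def B(1,2,1,3) B(4) B(5) n1 n2 ne int cov] .
  qed
qed

end

theorem proposition5:
  fixes C :: "(real^2) set" and n :: nat
  assumes "n \<ge> 10" and "finite C" and "card C = n"
    and "general_position C" and "convex_position C"
  shows "mv_number (segments C) disj_adj = (n choose 2) - 5"
proof -
  interpret cpos C using assms by (unfold_locales) auto
  have cV: "card V = n choose 2" using card_segments[OF assms(2)] assms(3) by simp
  have finV: "finite V" using finite_segments[OF assms(2)] .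
  define S where "S = {card U | U. mv_set V disj_adj U}"
  have "S \<subseteq> card ` Pow V"
  proof
    fix x assume "x \<in> S"
    then obtain U where U: "x = card U" "mv_set V disj_adj U" unfolding S_def by blast
    then have "U \<in> Pow V" unfolding mv_set_def by simp
    then show "x \<in> card ` Pow V" using U(1) by (rule rev_image_eqI)
  qed
  moreover have "finite (card ` Pow V)" using finV by simp
  ultimately have finS: "finite S" by (rule finite_subset)
  have "card (V - W0) = (n choose 2) - 5"
    using card_Diff_subset[OF finite_subset[OF W0_sub finV] W0_sub] card_W0 cV by simp
  then have inS: "(n choose 2) - 5 \<in> S" unfolding S_def mem_Collect_eq using lower
    by (intro exI[of _ "V - W0"] conjI) simp_all
  have le: "x \<le> (n choose 2) - 5" if "x \<in> S" for x
    using that upper cV unfolding S_def by fastforce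
  have "Max S = (n choose 2) - 5" using Max_eqI[OF finS le inS] .
  then show ?thesis unfolding mv_number_def S_def .
qed


end
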